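(* Let $\Gamma=(G,\sigma)$ be a connected signed graph with $G=(V,E)$, $|V|=n$, and $\sigma\equiv-1$. For each $p>1$ let $f^{(p)}\in\mathcal S_p$ be an eigenfunction of $\Delta_p^\sigma$ with eigenvalue $\lambda_n^{(p)}$. Then for every $i\in V$ the limit $\lim_{p\to\infty}|f^{(p)}(i)|^{p/2}$ exists, and the function $f(i):=\lim_{p\to\infty}|f^{(p)}(i)|^{p/2}$ is an eigenfunction of $A^\mu_{-\Gamma}$ corresponding to the eigenvalue $\lambda_n(A^\mu_{-\Gamma})$.
   Context: $G=(V,E)$ is a finite undirected graph without self-loops, $V=\{1,\dots,n\}$. A signed graph $\Gamma=(G,\sigma)$ has signature $\sigma:E\to\{\pm1\}$, edge weight $w:E\to(0,\infty)$, vertex measure $\mu:V\to(0,\infty)$, potential $\kappa:V\to\mathbb R$. With $\Psi_p(t)=|t|^{p-2}t$ ($\Psi_p(0)=0$), the $p$-Laplacian is $\Delta_p^\sigma f(i)=\sum_{j\sim i}w_{ij}\Psi_p(f(i)-\sigma_{ij}f(j))+\kappa_i\Psi_p(f(i))$; a nonzero $f$ is an eigenfunction with eigenvalue $\lambda$ if $\Delta_p^\sigma f(i)=\lambda\mu_i\Psi_p(f(i))$ for all $i$. $\mathcal R_p^\sigma(f)=\frac{\sum_{\{i,j\}\in E}w_{ij}|f(i)-\sigma_{ij}f(j)|^p+\sum_i\kappa_i|f(i)|^p}{\sum_i\mu_i|f(i)|^p}$; $\mathcal S_p=\{f:\sum_i\mu_i|f(i)|^p=1\}$; Krasnoselskii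 genus $\gamma(B)$ of closed symmetric $B\subset\mathbb R^n\setminus\{0\}$: least $k$ with an odd continuous map $B\to\mathbb R^k\setminus\{0\}$; $\mathcal F_k(\mathcal S_p)$ = closed symmetric $B\subset\mathcal S_p$ with $\gamma(B)\ge k$; variational eigenvalues $\lambda_k^{(p)}=\min_{B\in\mathcal F_k(\mathcal S_p)}\max_{f\in B}\mathcal R_p^\sigma(f)$ (in particular $\lambda_n^{(p)}=\max_{f\in\mathcal S_p}\mathcal R_p^\sigma(f)$). $-\Gamma=(G,-\sigma)$; $A_{\Gamma}$ has entries $\sigma_{ij}w_{ij}$ for $i\sim j$, $0$ otherwise; $A^\mu_\Gamma=\mathrm{diag}(\mu)^{-1}A_\Gamma$, with eigenvalues $\lambda_1\le\dots\le\lambda_n$. *)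

theory Defs
  imports Complex_Main
begin

text \<open>Vertices are the elements of a finite type 'n (playing the role of V = {1..n}).
  The graph is given by a symmetric irreflexive adjacency relation E; the signature
  sigma, edge weight w are functions on ordered pairs (only their values on edges matter,
  and they are required to be symmetric there); mu is the vertex measure, kappa the potential.\<close>

definition signed_graph ::
  "('n::finite \<Rightarrow> 'n \<Rightarrow> bool) \<Rightarrow> ('n \<Rightarrow> 'n \<Rightarrow> real) \<Rightarrow> ('n \<Rightarrow> 'n \<Rightarrow> real) \<Rightarrow> ('n \<Rightarrow> real) \<Rightarrow> bool" where
  "signed_graph E sigma w mu \<longleftrightarrow>
     (\<forall>i. \<not> E i i) \<and> (\<forall>i j. E i j \<longrightarrow> E j i) \<and>
     (\<forall>i j. E i j \<longrightarrow> w i j > 0 \<and> w i j = w j i \<and> sigma i j \<in> {-1, 1} \<and> sigma i j = sigma j i) \<and>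
     (\<forall>i. mu i > 0)"

definition connected_graph :: "('n::finite \<Rightarrow> 'n \<Rightarrow> bool) \<Rightarrow> bool" where
  "connected_graph E \<longleftrightarrow> (\<forall>i j. E\<^sup>*\<^sup>* i j)"

definition Psi :: "real \<Rightarrow> real \<Rightarrow> real" where
  "Psi p t = (if t = 0 then 0 else \<bar>t\<bar> powr (p - 2) * t)"

definition p_laplacian ::
  "('n::finite \<Rightarrow> 'n \<Rightarrow> bool) \<Rightarrow> ('n \<Rightarrow> 'n \<Rightarrow> real) \<Rightarrow> ('n \<Rightarrow> 'n \<Rightarrow> real) \<Rightarrow> ('n \<Rightarrow> real)
    \<Rightarrow> real \<Rightarrow> ('n \<Rightarrow> real) \<Rightarrow> 'n \<Rightarrow> real" where
  "p_laplacian E sigma w kappa p f i =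
     (\<Sum>j\<in>{j. E i j}. w i j * Psi p (f i - sigma i j * f j)) + kappa i * Psi p (f i)"

definition p_eigenfunction ::
  "('n::finite \<Rightarrow> 'n \<Rightarrow> bool) \<Rightarrow> ('n \<Rightarrow> 'n \<Rightarrow> real) \<Rightarrow> ('n \<Rightarrow> 'n \<Rightarrow> real) \<Rightarrow> ('n \<Rightarrow> real)
    \<Rightarrow> ('n \<Rightarrow> real) \<Rightarrow> real \<Rightarrow> ('n \<Rightarrow> real) \<Rightarrow> real \<Rightarrow> bool" where
  "p_eigenfunction E sigma w mu kappa p f lam \<longleftrightarrow>
     f \<noteq> (\<lambda>_. 0) \<and> (\<forall>i. p_laplacian E sigma w kappa p f i = lam * mu i * Psi p (f i))"

text \<open>Sum over unordered edges {i,j} written as half the sum over ordered adjacent pairs.\<close>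
definition rayleigh ::
  "('n::finite \<Rightarrow> 'n \<Rightarrow> bool) \<Rightarrow> ('n \<Rightarrow> 'n \<Rightarrow> real) \<Rightarrow> ('n \<Rightarrow> 'n \<Rightarrow> real) \<Rightarrow> ('n \<Rightarrow> real)
    \<Rightarrow> ('n \<Rightarrow> real) \<Rightarrow> real \<Rightarrow> ('n \<Rightarrow> real) \<Rightarrow> real" where
  "rayleigh E sigma w mu kappa p f =
     ((1/2) * (\<Sum>(i,j)\<in>{(i,j). E i j}. w i j * \<bar>f i - sigma i j * f j\<bar> powr p)
        + (\<Sum>i\<in>UNIV. kappa i * \<bar>f i\<bar> powr p))
     / (\<Sum>i\<in>UNIV. mu i * \<bar>f i\<bar> powr p)"

definition S_p :: "('n::finite \<Rightarrow> real) \<Rightarrow> real \<Rightarrow> ('n \<Rightarrow> real) set" where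
  "S_p mu p = {f. (\<Sum>i\<in>UNIV. mu i * \<bar>f i\<bar> powr p) = 1}"

text \<open>The largest variational eigenvalue lambda_n^(p) = max over S_p of the Rayleigh quotient.\<close>
definition lambda_max_p ::
  "('n::finite \<Rightarrow> 'n \<Rightarrow> bool) \<Rightarrow> ('n \<Rightarrow> 'n \<Rightarrow> real) \<Rightarrow> ('n \<Rightarrow> 'n \<Rightarrow> real) \<Rightarrow> ('n \<Rightarrow> real)
    \<Rightarrow> ('n \<Rightarrow> real) \<Rightarrow> real \<Rightarrow> real" where
  "lambda_max_p E sigma w mu kappa p = Sup (rayleigh E sigma w mu kappa p ` S_p mu p)"

text \<open>A^mu_Gamma = diag(mu)^{-1} A_Gamma, as a matrix indexed by vertices.\<close>
definition adj_mu ::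
  "('n::finite \<Rightarrow> 'n \<Rightarrow> bool) \<Rightarrow> ('n \<Rightarrow> 'n \<Rightarrow> real) \<Rightarrow> ('n \<Rightarrow> 'n \<Rightarrow> real) \<Rightarrow> ('n \<Rightarrow> real)
    \<Rightarrow> 'n \<Rightarrow> 'n \<Rightarrow> real" where
  "adj_mu E sigma w mu i j = (if E i j then sigma i j * w i j / mu i else 0)"

definition mat_eigenvector :: "('n::finite \<Rightarrow> 'n \<Rightarrow> real) \<Rightarrow> real \<Rightarrow> ('n \<Rightarrow> real) \<Rightarrow> bool" where
  "mat_eigenvector M lam f \<longleftrightarrow> f \<noteq> (\<lambda>_. 0) \<and> (\<forall>i. (\<Sum>j\<in>UNIV. M i j * f j) = lam * f i)"

definition mat_eigenvalues :: "('n::finite \<Rightarrow> 'n \<Rightarrow> real) \<Rightarrow> real set" where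
  "mat_eigenvalues M = {lam. \<exists>f. mat_eigenvector M lam f}"

text \<open>Largest eigenvalue lambda_n (the matrices considered are similar to symmetric ones,
  so all eigenvalues are real).\<close>
definition mat_lambda_max :: "('n::finite \<Rightarrow> 'n \<Rightarrow> real) \<Rightarrow> real" where
  "mat_lambda_max M = Max (mat_eigenvalues M)"

end

theory Submission
  imports Defs "HOL-Analysis.Analysis" "HOL-Real_Asymp.Real_Asymp"
begin


lemma powr_mvt_le:
  fixes U V p :: real
  assumes "0 \<le> U" "U \<le> V" "1 \<le> p"
  shows "V powr p - U powr p \<le> p * V powr (p - 1) * (V - U)"
proof (cases "U = 0")
  case True
  show ?thesis
  proof (cases "V = 0")
    case True with \<open>U = 0\<close> show ?thesis by simp
  next
    case False
    then have "V > 0" using assms by simp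
    have "V powr (p - 1) * V = V powr p"
      using \<open>V > 0\<close> by (simp add: powr_diff)
    then have "p * V powr (p - 1) * (V - U) = p * V powr p" using True by (simp add: mult.assoc)
    moreover have "V powr p \<le> p * V powr p" using assms by (simp add: mult_le_cancel_right1)
    moreover have "U powr p = 0" using True by simp
    ultimately show ?thesis by linarith
  qed
next
  case False
  then have U0: "U > 0" using assms by simp
  show ?thesis
  proof (cases "U = V")
    case True then show ?thesis by simp
  next
    case False
    then have "U < V" using assms by simp
    have cont: "continuous_on {U..V} (\<lambda>x. x powr p)"
      using U0 by (intro continuous_intros) auto
    have dif: "\<And>x. U < x \<Longrightarrow> x < V \<Longrightarrow> (\<lambda>x. x powr p) differentiable (at x)"
      using U0 by (metis has_real_derivative_powr less_trans real_differentiable_def)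
    obtain l z where z: "U < z" "z < V" "DERIV (\<lambda>x. x powr p) z :> l"
        "V powr p - U powr p = (V - U) * l"
      using MVT[OF \<open>U < V\<close> cont dif] by blast
    have "l = p * z powr (p - 1)"
      using z(3) has_real_derivative_powr[of z p] U0 z(1) DERIV_unique by force
    moreover have "z powr (p - 1) \<le> V powr (p - 1)"
      using z U0 assms by (intro powr_mono2) auto
    ultimately show ?thesis using z(4) assms \<open>U < V\<close>
      by (simp add: mult_left_mono mult_right_mono mult.commute mult.left_commute)
  qed
qed

lemma exp_ge_sq4: "(x::real) \<ge> 0 \<Longrightarrow> x^2 / 4 \<le> exp x"
proof -
  assume x: "x \<ge> 0"
  have "exp x = exp (x/2) ^ 2" by (simp add: power2_eq_square exp_add[symmetric])
  moreover have "1 + x/2 \<le> exp (x/2)" by (rule exp_ge_add_one_self)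
  moreover have "x^2/4 \<le> (1 + x/2)^2" using x by (simp add: power2_eq_square field_simps)
  moreover have "(1 + x/2)^2 \<le> exp (x/2) ^ 2" using x calculation(2) by (intro power_mono) auto
  ultimately show ?thesis by linarith
qed

lemma core_bound:
  fixes u p :: real
  assumes u: "0 \<le> u" "u \<le> 1" and p: "p > 1"
  shows "((1 + u^2)/2) powr p - u powr p \<le> 8 * p / (p - 1)^2"
proof -
  define v where "v = (1 + u^2)/2"
  define s where "s = 1 - v"
  have uv: "u \<le> v"
  proof -
    have "0 \<le> (1 - u)^2" by simp
    then show ?thesis unfolding v_def by (simp add: power2_eq_square algebra_simps)
  qed
  have "u^2 \<le> 1" using u by (simp add: power_le_one)
  then have v1: "v \<le> 1" unfolding v_def by simp
  have vpos: "v > 0" unfolding v_def by (simp add: add_pos_nonneg)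
  have s0: "s \<ge> 0" using v1 s_def by simp
  have vu: "v - u \<le> 2 * s^2"
  proof -
    have "v - u = (1 - u)^2 / 2" unfolding v_def by (simp add: power2_eq_square field_simps)
    moreover have "1 - u \<le> 2 * s"
    proof -
      have "u * u \<le> u * 1" using u by (intro mult_left_mono) auto
      then show ?thesis unfolding s_def v_def by (simp add: power2_eq_square field_simps)
    qed
    moreover have "(1 - u)^2 \<le> (2 * s)^2" using calculation(2) u by (intro power_mono) auto
    ultimately show ?thesis by (simp add: power2_eq_square)
  qed
  have "v powr p - u powr p \<le> p * v powr (p - 1) * (v - u)"
    using powr_mvt_le[of u v p] u uv p by simp
  also have "\<dots> \<le> p * v powr (p - 1) * (2 * s^2)"
    using vu p vpos by (intro mult_left_mono) auto
  moreover have key: "v powr (p - 1) * s^2 \<le> 4 / (p - 1)^2"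
  proof -
    have "v \<le> exp (- s)" unfolding s_def using exp_ge_add_one_self[of "-(1-v)"] by simp
    then have "v powr (p - 1) \<le> exp (- s) powr (p - 1)"
      using vpos p by (intro powr_mono2) auto
    also have "\<dots> = exp (- ((p - 1) * s))" by (simp add: powr_def)
    finally have a: "v powr (p - 1) \<le> exp (- ((p - 1) * s))" .
    have b: "((p - 1) * s)^2 / 4 \<le> exp ((p - 1) * s)" using p s0 by (intro exp_ge_sq4) auto
    have "v powr (p - 1) * s^2 \<le> exp (- ((p - 1) * s)) * s^2"
      using a by (intro mult_right_mono) auto
    also have "\<dots> = s^2 / exp ((p - 1) * s)" by (simp add: exp_minus divide_inverse mult.commute)
    also have "\<dots> \<le> 4 / (p - 1)^2"
    proof -
      have "s^2 * (p-1)^2 \<le> 4 * exp ((p - 1) * s)" using b by (simp add: power_mult_distrib mult.commute)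
      then show ?thesis using p by (simp add: field_simps)
    qed
    finally show ?thesis .
  qed
  moreover have "p * v powr (p - 1) * (2 * s^2) \<le> 8 * p / (p-1)^2"
  proof -
    have "p * v powr (p - 1) * (2 * s^2) = (2 * p) * (v powr (p - 1) * s^2)" by simp
    also have "\<dots> \<le> (2 * p) * (4 / (p-1)^2)" using key p by (intro mult_left_mono) auto
    also have "\<dots> = 8 * p / (p-1)^2" by simp
    finally show ?thesis .
  qed
  ultimately show ?thesis unfolding v_def by linarith
qed


lemma sq_powr: fixes x p :: real shows "0 \<le> x \<Longrightarrow> (x powr (1/p))^2 = x powr (2/p)"
  by (simp add: power2_eq_square powr_add[symmetric])

lemma pair_upper_aux:
  fixes a b p :: real
  assumes ab: "0 \<le> a" "a \<le> b" and p: "p > 1"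
  shows "(a powr (2/p) + b powr (2/p)) powr p \<le> 2 powr p * (a*b + (a^2+b^2) * (8*p/(p-1)^2))"
proof (cases "b = 0")
  case True
  then have "a = 0" using ab by simp
  then show ?thesis using True by simp
next
  case False
  then have b: "b > 0" using ab by simp
  define c where "c = 8*p/(p-1)^2"
  have c0: "c \<ge> 0" unfolding c_def using p by simp
  define u where "u = (a/b) powr (1/p)"
  have u0: "0 \<le> u" unfolding u_def by simp
  have u1: "u \<le> 1"
  proof -
    have "(a/b) powr (1/p) \<le> 1 powr (1/p)" using ab b p by (intro powr_mono2) auto
    then show ?thesis unfolding u_def by simp
  qed
  have u2: "u^2 = (a/b) powr (2/p)" unfolding u_def using ab b by (intro sq_powr) simp
  have up: "u powr p = a/b" unfolding u_def using ab b p by (simp add: powr_powr)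
  have aeq: "a powr (2/p) = u^2 * b powr (2/p)"
    using u2 ab b by (simp add: powr_divide)
  have e: "a powr (2/p) + b powr (2/p) = 2 * (b powr (2/p) * ((1 + u^2)/2))"
    using aeq by (simp add: algebra_simps)
  have n2: "0 \<le> (1 + u^2)/2" by simp
  have m1: "(2 * (b powr (2/p) * ((1 + u^2)/2))) powr p = 2 powr p * (b powr (2/p) * ((1 + u^2)/2)) powr p"
    by (rule powr_mult; simp add: n2)
  have m2: "(b powr (2/p) * ((1 + u^2)/2)) powr p = (b powr (2/p)) powr p * ((1 + u^2)/2) powr p"
    by (rule powr_mult; simp add: n2)
  have "(a powr (2/p) + b powr (2/p)) powr p = 2 powr p * (b powr (2/p)) powr p * ((1 + u^2)/2) powr p"
    unfolding e m1 m2 by simp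
  also have "(b powr (2/p)) powr p = b^2" using b p by (simp add: powr_powr)
  also have "((1 + u^2)/2) powr p \<le> u powr p + c"
    using core_bound[OF u0 u1 p] unfolding c_def by linarith
  then have "2 powr p * b^2 * ((1 + u^2)/2) powr p \<le> 2 powr p * b^2 * (u powr p + c)"
    by (intro mult_left_mono) auto
  also have "2 powr p * b^2 * (u powr p + c) = 2 powr p * (a*b + b^2 * c)"
    using up b by (simp add: power2_eq_square field_simps)
  also have "\<dots> \<le> 2 powr p * (a*b + (a^2+b^2) * c)"
    using c0 by (intro mult_left_mono add_left_mono mult_right_mono) auto
  finally show ?thesis unfolding c_def .
qed

lemma pair_upper:
  fixes a b p :: real
  assumes ab: "0 \<le> a" "0 \<le> b" and p: "p > 1"
  shows "(a powr (2/p) + b powr (2/p)) powr p \<le> 2 powr p * (a*b + (a^2+b^2) * (8*p/(p-1)^2))"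
proof (cases "a \<le> b")
  case True then show ?thesis using pair_upper_aux[OF ab(1) True p] by simp
next
  case False
  then have "b \<le> a" by simp
  from pair_upper_aux[OF ab(2) this p] show ?thesis by (simp add: add.commute mult.commute)
qed

lemma pair_lower:
  fixes a b p :: real
  assumes ab: "0 \<le> a" "0 \<le> b" and p: "p > 1"
  shows "2 powr p * (a*b) \<le> (a powr (2/p) + b powr (2/p)) powr p"
proof -
  define x where "x = a powr (1/p)"
  define y where "y = b powr (1/p)"
  have "2 * (x * y) \<le> x^2 + y^2" using sum_squares_bound[of x y] by (simp add: power2_eq_square)
  moreover have "x^2 = a powr (2/p)" "y^2 = b powr (2/p)" unfolding x_def y_def using ab by (auto intro: sq_powr)
  moreover have "x * y = (a*b) powr (1/p)" unfolding x_def y_def using ab by (simp add: powr_mult)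
  ultimately have le: "2 * (a*b) powr (1/p) \<le> a powr (2/p) + b powr (2/p)" by simp
  have "2 powr p * (a*b) = (2 * (a*b) powr (1/p)) powr p"
    using ab p by (simp add: powr_mult powr_powr)
  also have "\<dots> \<le> (a powr (2/p) + b powr (2/p)) powr p"
    using le p by (intro powr_mono2) auto
  finally show ?thesis .
qed



lemma conv_unique_zero:
  fixes G :: "real \<Rightarrow> 'a::metric_space" and phi :: "'a \<Rightarrow> real"
  assumes S: "compact S" and cont: "continuous_on S phi"
    and pos: "\<And>x. x \<in> S \<Longrightarrow> x \<noteq> x0 \<Longrightarrow> phi x > 0"
    and ev: "eventually (\<lambda>p. G p \<in> S) at_top"
    and lim: "((\<lambda>p. phi (G p)) \<longlongrightarrow> 0) at_top"
  shows "(G \<longlongrightarrow> x0) at_top"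
proof (rule tendstoI)
  fix e :: real assume e: "e > 0"
  define T where "T = S \<inter> {x. e \<le> dist x x0}"
  have cT: "compact T" unfolding T_def
    by (intro compact_Int_closed S closed_Collect_le continuous_intros)
  show "eventually (\<lambda>p. dist (G p) x0 < e) at_top"
  proof (cases "T = {}")
    case True
    show ?thesis using ev by eventually_elim (use True in \<open>auto simp: T_def\<close>)
  next
    case False
    obtain x1 where x1: "x1 \<in> T" "\<And>y. y \<in> T \<Longrightarrow> phi x1 \<le> phi y"
      using continuous_attains_inf[OF cT False continuous_on_subset[OF cont]] T_def by auto
    have "x1 \<noteq> x0" using x1(1) e unfolding T_def by auto
    then have d: "phi x1 > 0" using pos x1(1) T_def by auto
    have "eventually (\<lambda>p. phi (G p) < phi x1) at_top"
      using order_tendstoD(2)[OF lim d] .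
    then show ?thesis using ev
    proof eventually_elim
      case (elim p)
      then show ?case using x1(2)[of "G p"] unfolding T_def by force
    qed
  qed
qed



lemma quad_zero:
  fixes x c :: real
  assumes "\<And>t. t * x + t^2 * c \<le> 0"
  shows "x = 0"
proof -
  define d where "d = \<bar>c\<bar> + 1"
  have d: "d > 0" unfolding d_def by simp
  have "(x/d) * x + (x/d)^2 * c \<le> 0" by (rule assms)
  moreover have "(x/d) * x + (x/d)^2 * c = x^2 * (d + c) / d^2"
    using d by (simp add: power2_eq_square field_simps)
  moreover have "d + c \<ge> 1" unfolding d_def by simp
  ultimately have "x^2 * (d + c) \<le> 0" using d
    by (simp add: divide_le_0_iff)
  then have "x^2 \<le> 0" using \<open>d + c \<ge> 1\<close>
    by (smt (verit) mult_le_0_iff zero_le_power2)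
  then show ?thesis by simp
qed

lemma abs_le_1_sq: "\<bar>x::real\<bar> \<le> 1 + x^2"
proof (cases "\<bar>x\<bar> \<le> 1")
  case True then show ?thesis by (simp add: add_increasing2)
next
  case False
  then have "\<bar>x\<bar> * 1 \<le> \<bar>x\<bar> * \<bar>x\<bar>" by (intro mult_left_mono) auto
  then show ?thesis by (simp add: power2_eq_square)
qed

locale wgraph =
  fixes E :: "'n::finite \<Rightarrow> 'n \<Rightarrow> bool" and W :: "'n \<Rightarrow> 'n \<Rightarrow> real" and mu :: "'n \<Rightarrow> real"
  assumes Wsym: "\<And>i j. W i j = W j i" and Wnn: "\<And>i j. W i j \<ge> 0"
    and WE: "\<And>i j. E i j \<Longrightarrow> W i j > 0"
    and mupos: "\<And>i. mu i > 0" and conn: "\<And>i j. E\<^sup>*\<^sup>* i j"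
begin

lemma vnth_vl[simp]: "($) (vec_lambda h) = h"
  by (rule ext) simp

definition Q :: "('n \<Rightarrow> real) \<Rightarrow> real" where
  "Q g = (\<Sum>i\<in>UNIV. \<Sum>j\<in>UNIV. W i j * g i * g j)"
definition N :: "('n \<Rightarrow> real) \<Rightarrow> real" where
  "N g = (\<Sum>i\<in>UNIV. mu i * (g i)^2)"
definition Kv :: "(real^'n) set" where
  "Kv = {v. (\<forall>i. 0 \<le> v$i) \<and> N (($) v) = 1}"

lemma mu_sq_nonneg: "0 \<le> mu i * y^2"
  using mupos[of i] by simp

lemma N_nonneg: "N g \<ge> 0"
  unfolding N_def by (intro sum_nonneg mu_sq_nonneg)

lemma N_zero: assumes "N g = 0" shows "g i = 0"
proof -
  have "\<forall>i\<in>UNIV. mu i * (g i)^2 = 0"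
    using assms unfolding N_def
    by (subst sum_nonneg_eq_0_iff[symmetric]) (auto intro: mu_sq_nonneg)
  then have "mu i = 0 \<or> g i = 0" by simp
  then show ?thesis using mupos[of i] by auto
qed

lemma Q_abs: "Q g \<le> Q (\<lambda>i. \<bar>g i\<bar>)"
  unfolding Q_def
proof (intro sum_mono)
  fix i j
  have "g i * g j \<le> \<bar>g i\<bar> * \<bar>g j\<bar>" by (simp add: abs_mult[symmetric])
  then show "W i j * g i * g j \<le> W i j * \<bar>g i\<bar> * \<bar>g j\<bar>"
    using Wnn[of i j] by (simp add: mult.assoc mult_left_mono)
qed

lemma Q_scale: "Q (\<lambda>i. c * g i) = c^2 * Q g"
  unfolding Q_def by (simp add: sum_distrib_left power2_eq_square algebra_simps)

lemma N_scale: "N (\<lambda>i. c * g i) = c^2 * N g"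
  unfolding N_def by (simp add: sum_distrib_left power2_eq_square algebra_simps)

lemma N_abs: "N (\<lambda>i. \<bar>g i\<bar>) = N g"
  unfolding N_def by simp

lemma cont_Q: "continuous_on A (\<lambda>v::real^'n. Q (($) v))"
  unfolding Q_def by (intro continuous_intros)

lemma cont_N: "continuous_on A (\<lambda>v::real^'n. N (($) v))"
  unfolding N_def by (intro continuous_intros)

lemma compact_Kv: "compact Kv"
proof (rule compact_eq_bounded_closed[THEN iffD2], rule conjI)
  define R where "R = (\<Sum>i\<in>UNIV. 1 + 1 / mu i)"
  show "bounded Kv" unfolding bounded_iff
  proof (intro exI ballI)
    fix v assume v: "v \<in> Kv"
    have "\<bar>v$i\<bar> \<le> 1 + 1 / mu i" for i
    proof -
      have "mu i * (v$i)^2 \<le> N (($) v)"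
        unfolding N_def
        by (intro member_le_sum) (auto intro: mu_sq_nonneg)
      then have "mu i * (v$i)^2 \<le> 1" using v unfolding Kv_def by simp
      then have "(v$i)^2 \<le> 1 / mu i" using mupos[of i] by (simp add: field_simps)
      moreover have "\<bar>v$i\<bar> \<le> 1 + (v$i)^2"
        by (rule abs_le_1_sq)
      ultimately show ?thesis by simp
    qed
    then have "(\<Sum>i\<in>UNIV. \<bar>v$i\<bar>) \<le> R" unfolding R_def by (intro sum_mono) auto
    then show "norm v \<le> R" using norm_le_l1_cart[of v] by simp
  qed
  have "Kv = (\<Inter>i. {v. 0 \<le> v$i}) \<inter> {v. N (($) v) = 1}"
    unfolding Kv_def by auto
  moreover have "closed (\<Inter>i. {v::real^'n. 0 \<le> v$i})"
    by (intro closed_INT ballI closed_Collect_le continuous_intros)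
  moreover have "closed {v::real^'n. N (($) v) = 1}"
    by (intro closed_Collect_eq cont_N continuous_intros)
  ultimately show "closed Kv" by (simp add: closed_Int)
qed

lemma Kv_nonempty: "Kv \<noteq> {}"
proof -
  define c where "c = 1 / sqrt (\<Sum>i\<in>UNIV. mu i)"
  have sp: "(\<Sum>i\<in>UNIV. mu i) > 0" using mupos by (intro sum_pos) auto
  have "N (($) (\<chi> i. c)) = c^2 * (\<Sum>i\<in>UNIV. mu i)"
    unfolding N_def by (simp add: sum_distrib_right mult.commute)
  also have "\<dots> = 1" unfolding c_def using sp by (simp add: power_divide)
  finally have "(\<chi> i. c) \<in> Kv" unfolding Kv_def c_def using sp by auto
  then show ?thesis by auto
qed

lemma exists_max: "\<exists>v\<in>Kv. \<forall>y\<in>Kv. Q (($) y) \<le> Q (($) v)"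
  using continuous_attains_sup[OF compact_Kv Kv_nonempty cont_Q] by blast

definition vmax :: "real^'n" where
  "vmax = (SOME v. v \<in> Kv \<and> (\<forall>y\<in>Kv. Q (($) y) \<le> Q (($) v)))"

definition Lam :: real where "Lam = Q (($) vmax)"

lemma vmax: "vmax \<in> Kv" "\<And>y. y \<in> Kv \<Longrightarrow> Q (($) y) \<le> Lam"
  using someI_ex[OF exists_max[unfolded Bex_def]] unfolding vmax_def[symmetric] Lam_def by auto

lemma Q_le: "Q g \<le> Lam * N g"
proof (cases "N g = 0")
  case True
  then have "g = (\<lambda>_. 0)" using N_zero by auto
  then show ?thesis using True unfolding Q_def by simp
next
  case False
  then have Np: "N g > 0" using N_nonneg[of g] by simp
  define c where "c = 1 / sqrt (N g)"
  have c2: "c^2 = 1 / N g" unfolding c_def using Np by (simp add: power_divide)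
  define h where "h = (\<lambda>i. c * \<bar>g i\<bar>)"
  have "N h = 1" unfolding h_def N_scale N_abs c2 using Np by simp
  moreover have "\<forall>i. 0 \<le> h i" unfolding h_def c_def using N_nonneg[of g] by simp
  ultimately have "(\<chi> i. h i) \<in> Kv" unfolding Kv_def by simp
  then have "Q h \<le> Lam" using vmax(2) by fastforce
  then have "c^2 * Q (\<lambda>i. \<bar>g i\<bar>) \<le> Lam" unfolding h_def Q_scale .
  then have "Q (\<lambda>i. \<bar>g i\<bar>) \<le> Lam * N g" unfolding c2 using Np by (simp add: field_simps)
  then show ?thesis using Q_abs[of g] by linarith
qed

lemma Q_expand: "Q (\<lambda>i. g i + t * h i) =
    Q g + t * (\<Sum>i\<in>UNIV. \<Sum>j\<in>UNIV. h i * (W i j * g j)) + t * (\<Sum>i\<in>UNIV. \<Sum>j\<in>UNIV. g i * (W i j * h j)) + t^2 * Q h"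
proof -
  have e: "W i j * (g i + t * h i) * (g j + t * h j) = W i j * g i * g j + t * (h i * (W i j * g j))
     + t * (g i * (W i j * h j)) + t^2 * (W i j * h i * h j)" for i j
    by (simp add: algebra_simps power2_eq_square)
  show ?thesis unfolding Q_def e by (simp add: sum.distrib sum_distrib_left)
qed

lemma N_expand: "N (\<lambda>i. g i + t * h i) = N g + 2 * t * (\<Sum>i\<in>UNIV. mu i * g i * h i) + t^2 * N h"
proof -
  have e: "mu i * (g i + t * h i)^2 = mu i * (g i)^2 + 2 * t * (mu i * g i * h i) + t^2 * (mu i * (h i)^2)" for i
    by (simp add: algebra_simps power2_eq_square)
  show ?thesis unfolding N_def e by (simp add: sum.distrib sum_distrib_left)
qed

lemma sum_delta_mult: "(\<Sum>i\<in>UNIV. (if i = (k::'n) then (1::real) else 0) * F i) = F k"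
proof -
  have "(\<Sum>i\<in>UNIV. (if i = k then (1::real) else 0) * F i) = (\<Sum>i\<in>UNIV. if i = k then F i else 0)"
    by (intro sum.cong) auto
  also have "\<dots> = F k" using sum.delta[OF finite_class.finite_UNIV, of k F] by simp
  finally show ?thesis .
qed

lemma sum_delta_mult_right: "(\<Sum>i\<in>UNIV. F i * (if i = (k::'n) then (1::real) else 0)) = F k"
  using sum_delta_mult[of k F] by (simp add: mult.commute)

lemma Q_shift: "Q (\<lambda>i. g i + t * (if i = k then 1 else 0)) =
    Q g + 2 * t * (\<Sum>j\<in>UNIV. W k j * g j) + t^2 * W k k"
proof -
  have a: "(\<Sum>i\<in>UNIV. \<Sum>j\<in>UNIV. (if i = k then 1 else 0) * (W i j * g j)) = (\<Sum>j\<in>UNIV. W k j * g j)"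
    unfolding sum_distrib_left[symmetric] by (rule sum_delta_mult)
  have "(\<Sum>j\<in>UNIV. g i * (W i j * (if j = k then 1 else 0))) = g i * W i k" for i
    unfolding mult.assoc[symmetric] by (rule sum_delta_mult_right)
  then have b: "(\<Sum>i\<in>UNIV. \<Sum>j\<in>UNIV. g i * (W i j * (if j = k then 1 else 0))) = (\<Sum>j\<in>UNIV. W k j * g j)"
    using Wsym by (simp add: mult.commute)
  have "(\<Sum>j\<in>UNIV. W i j * (if i = k then 1 else 0) * (if j = k then 1 else 0)) = W i k * (if i = k then 1 else 0)" for i
    using sum_delta_mult_right[of "\<lambda>j. W i j * (if i = k then 1 else 0)" k] by (simp add: mult.commute)
  then have c: "Q (\<lambda>i. if i = k then 1 else 0) = W k k"
    unfolding Q_def using sum_delta_mult_right[of "\<lambda>i. W i k" k] by simp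
  show ?thesis unfolding Q_expand a b c by simp
qed

lemma N_shift: "N (\<lambda>i. g i + t * (if i = k then 1 else 0)) =
    N g + 2 * t * (mu k * g k) + t^2 * mu k"
proof -
  have a: "(\<Sum>i\<in>UNIV. mu i * g i * (if i = k then 1 else 0)) = mu k * g k"
    by (rule sum_delta_mult_right)
  have "N (\<lambda>i. if i = k then 1 else 0) = (\<Sum>i\<in>UNIV. mu i * (if i = k then 1 else 0))"
    unfolding N_def by (intro sum.cong) auto
  then have c: "N (\<lambda>i. if i = k then 1 else 0) = mu k" using sum_delta_mult_right[of mu k] by simp
  show ?thesis unfolding N_expand a c by simp
qed

lemma eigen_of_max:
  assumes "Q g = Lam * N g"
  shows "(\<Sum>j\<in>UNIV. W k j * g j) = Lam * mu k * g k"
proof -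
  have "t * (2 * ((\<Sum>j\<in>UNIV. W k j * g j) - Lam * mu k * g k)) + t^2 * (W k k - Lam * mu k) \<le> 0" for t
  proof -
    have "Q (\<lambda>i. g i + t * (if i = k then 1 else 0)) \<le> Lam * N (\<lambda>i. g i + t * (if i = k then 1 else 0))"
      by (rule Q_le)
    then show ?thesis unfolding Q_shift N_shift assms by (simp add: algebra_simps)
  qed
  from quad_zero[OF this] show ?thesis by simp
qed

lemma pos_of_eigen:
  assumes eq: "\<And>k. (\<Sum>j\<in>UNIV. W k j * g j) = L * mu k * g k"
    and nn: "\<And>i. g i \<ge> 0" and nz: "g i1 \<noteq> 0"
  shows "g i > 0"
proof (rule ccontr)
  assume "\<not> g i > 0"
  then have gi: "g i = 0" using nn[of i] by simp
  have "g j = 0" for j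
    using conn[of i j]
  proof (induction rule: rtranclp_induct)
    case base then show ?case using gi .
  next
    case (step y z)
    have "(\<Sum>j\<in>UNIV. W y j * g j) = 0" using eq[of y] step.IH by simp
    then have "\<forall>j\<in>UNIV. W y j * g j = 0"
      by (subst sum_nonneg_eq_0_iff[symmetric]) (auto intro: mult_nonneg_nonneg Wnn nn)
    then have "W y z * g z = 0" by simp
    then show ?case using WE[OF step.hyps(2)] by simp
  qed
  then show False using nz by simp
qed

lemma N_one_nz: assumes "N g = 1" obtains i where "g i \<noteq> 0"
proof -
  have "\<exists>i. g i \<noteq> 0"
  proof (rule ccontr)
    assume "\<not> (\<exists>i. g i \<noteq> 0)"
    then have "N g = 0" unfolding N_def by simp
    then show False using assms by simp
  qed
  then show ?thesis using that by blast
qed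

lemma unique_max:
  assumes g: "\<And>i. g i \<ge> 0" "N g = 1" "Q g = Lam"
    and h: "\<And>i. h i \<ge> 0" "N h = 1" "Q h = Lam"
  shows "g = h"
proof -
  have eg: "\<And>k. (\<Sum>j\<in>UNIV. W k j * g j) = Lam * mu k * g k"
    using eigen_of_max g by simp
  have eh: "\<And>k. (\<Sum>j\<in>UNIV. W k j * h j) = Lam * mu k * h k"
    using eigen_of_max h by simp
  obtain i1 where i1: "g i1 \<noteq> 0" using N_one_nz[OF g(2)] .
  obtain i2 where i2: "h i2 \<noteq> 0" using N_one_nz[OF h(2)] .
  have gp: "\<And>i. g i > 0" using pos_of_eigen[OF eg g(1) i1] .
  have hp: "\<And>i. h i > 0" using pos_of_eigen[OF eh h(1) i2] .
  define t where "t = Min (range (\<lambda>k. g k / h k))"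
  have "t \<in> range (\<lambda>k. g k / h k)" unfolding t_def by (intro Min_in) auto
  then obtain k0 where k0: "t = g k0 / h k0" by auto
  have tle: "t \<le> g k / h k" for k unfolding t_def by (intro Min_le) auto
  have tpos: "t > 0" using k0 gp hp by simp
  define u where "u = (\<lambda>k. g k - t * h k)"
  have unn: "u k \<ge> 0" for k
    using tle[of k] hp[of k] unfolding u_def by (simp add: pos_le_divide_eq)
  have uk0: "u k0 = 0" unfolding u_def k0 using hp[of k0] by simp
  have eu: "(\<Sum>j\<in>UNIV. W k j * u j) = Lam * mu k * u k" for k
  proof -
    have "(\<Sum>j\<in>UNIV. W k j * u j) = (\<Sum>j\<in>UNIV. W k j * g j) - t * (\<Sum>j\<in>UNIV. W k j * h j)"
      unfolding u_def by (simp add: algebra_simps sum_subtractf sum_distrib_left)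
    then show ?thesis unfolding eg eh u_def by (simp add: algebra_simps)
  qed
  have u0: "u i = 0" for i
  proof (rule ccontr)
    assume "u i \<noteq> 0"
    from pos_of_eigen[OF eu unn this, of k0] uk0 show False by simp
  qed
  then have gth: "g = (\<lambda>k. t * h k)" unfolding u_def by (auto simp: fun_eq_iff)
  have "N g = t^2 * N h" unfolding gth N_scale ..
  then have "t^2 = 1" using g(2) h(2) by simp
  then have "t = 1" using tpos by (simp add: power2_eq_1_iff)
  then show ?thesis using gth by simp
qed

definition is_eig :: "real \<Rightarrow> ('n \<Rightarrow> real) \<Rightarrow> bool" where
  "is_eig L f \<longleftrightarrow> f \<noteq> (\<lambda>_. 0) \<and> (\<forall>i. (\<Sum>j\<in>UNIV. W i j * f j) = L * mu i * f i)"

lemma Q_eq_sum: "Q f = (\<Sum>i\<in>UNIV. f i * (\<Sum>j\<in>UNIV. W i j * f j))"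
  unfolding Q_def by (simp add: sum_distrib_left algebra_simps)

lemma eig_le: assumes "is_eig L f" shows "L \<le> Lam"
proof -
  have e: "\<And>i. (\<Sum>j\<in>UNIV. W i j * f j) = L * mu i * f i" and nz: "f \<noteq> (\<lambda>_. 0)"
    using assms unfolding is_eig_def by auto
  have "Q f = (\<Sum>i\<in>UNIV. L * (mu i * (f i)^2))"
    unfolding Q_eq_sum e by (simp add: power2_eq_square algebra_simps)
  also have "\<dots> = L * N f" unfolding N_def by (simp add: sum_distrib_left)
  finally have "L * N f \<le> Lam * N f" using Q_le[of f] by simp
  moreover have "N f \<noteq> 0" using nz N_zero by auto
  then have "N f > 0" using N_nonneg[of f] by simp
  ultimately show ?thesis by simp
qed

lemma eig_orth:
  assumes "is_eig L f" "is_eig M g" "L \<noteq> M"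
  shows "(\<Sum>i\<in>UNIV. mu i * f i * g i) = 0"
proof -
  have ef: "\<And>i. (\<Sum>j\<in>UNIV. W i j * f j) = L * mu i * f i"
   and eg: "\<And>i. (\<Sum>j\<in>UNIV. W i j * g j) = M * mu i * g i"
    using assms unfolding is_eig_def by auto
  have "(\<Sum>i\<in>UNIV. g i * (\<Sum>j\<in>UNIV. W i j * f j)) = (\<Sum>i\<in>UNIV. \<Sum>j\<in>UNIV. W i j * g i * f j)"
    by (simp add: sum_distrib_left algebra_simps)
  also have "\<dots> = (\<Sum>j\<in>UNIV. \<Sum>i\<in>UNIV. W i j * g i * f j)" by (rule sum.swap)
  also have "\<dots> = (\<Sum>j\<in>UNIV. f j * (\<Sum>i\<in>UNIV. W j i * g i))"
    using Wsym by (simp add: sum_distrib_left algebra_simps)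
  finally have "(\<Sum>i\<in>UNIV. g i * (L * mu i * f i)) = (\<Sum>j\<in>UNIV. f j * (M * mu j * g j))"
    unfolding ef eg .
  then have "L * (\<Sum>i\<in>UNIV. mu i * f i * g i) = M * (\<Sum>i\<in>UNIV. mu i * f i * g i)"
    by (simp add: sum_distrib_left algebra_simps)
  then show ?thesis using assms(3) by simp
qed

lemma finite_eig: "finite {L. \<exists>f. is_eig L f}"
proof -
  define EV where "EV = {L. \<exists>f. is_eig L f}"
  define ef where "ef = (\<lambda>L. SOME f. is_eig L f)"
  have ef: "is_eig L (ef L)" if "L \<in> EV" for L
  proof -
    from that obtain f where "is_eig L f" unfolding EV_def by auto
    then show ?thesis unfolding ef_def by (metis someI_ex)
  qed
  define phi :: "real \<Rightarrow> real^'n" where "phi = (\<lambda>L. \<chi> i. sqrt (mu i) * ef L i)"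
  have inner: "phi L \<bullet> phi M = (\<Sum>i\<in>UNIV. mu i * ef L i * ef M i)" for L M
    unfolding phi_def inner_vec_def using mupos
    by (intro sum.cong) (auto simp: real_sqrt_mult[symmetric] less_imp_le)
  have orth: "phi L \<bullet> phi M = 0" if "L \<in> EV" "M \<in> EV" "L \<noteq> M" for L M
    unfolding inner using eig_orth[OF ef[OF that(1)] ef[OF that(2)] that(3)] .
  have nz: "phi L \<noteq> 0" if "L \<in> EV" for L
  proof
    assume "phi L = 0"
    then have "sqrt (mu i) * ef L i = 0" for i unfolding phi_def by (metis vec_lambda_beta zero_index)
    then have "ef L i = 0" for i using mupos[of i] by (metis less_irrefl mult_eq_0_iff real_sqrt_eq_zero_cancel_iff)
    then show False using ef[OF that] unfolding is_eig_def by auto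
  qed
  have "pairwise orthogonal (phi ` EV)"
    unfolding pairwise_def orthogonal_def using orth by auto
  moreover have "0 \<notin> phi ` EV" using nz by auto
  ultimately have "independent (phi ` EV)" by (rule pairwise_orthogonal_independent)
  then have "finite (phi ` EV)" using independent_bound by auto
  moreover have "inj_on phi EV"
  proof (rule inj_onI)
    fix L M assume LM: "L \<in> EV" "M \<in> EV" "phi L = phi M"
    show "L = M"
    proof (rule ccontr)
      assume "L \<noteq> M"
      then have "phi L \<bullet> phi L = 0" using orth[OF LM(1,2)] LM(3) by simp
      then show False using nz[OF LM(1)] by simp
    qed
  qed
  ultimately show ?thesis unfolding EV_def[symmetric] using finite_imageD by blast
qed

lemma Lam_eig: "is_eig Lam (($) vmax)"
proof -
  have v: "\<And>i. 0 \<le> vmax $ i" "N (($) vmax) = 1" using vmax(1) unfolding Kv_def by auto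
  have "Q (($) vmax) = Lam * N (($) vmax)" using v(2) Lam_def by simp
  then have "\<And>k. (\<Sum>j\<in>UNIV. W k j * vmax $ j) = Lam * mu k * vmax $ k"
    by (rule eigen_of_max)
  moreover obtain i where "vmax $ i \<noteq> 0" using N_one_nz[OF v(2)] .
  ultimately show ?thesis unfolding is_eig_def by (auto simp: fun_eq_iff)
qed

lemma Max_eig: "Max {L. \<exists>f. is_eig L f} = Lam"
  by (rule Max_eqI[OF finite_eig]) (use eig_le Lam_eig in auto)

end


definition NUMp :: "('n::finite \<Rightarrow> 'n \<Rightarrow> real) \<Rightarrow> ('n \<Rightarrow> real) \<Rightarrow> real \<Rightarrow> ('n \<Rightarrow> real) \<Rightarrow> real" where
  "NUMp W kappa p h = (1/2) * (\<Sum>i\<in>UNIV. \<Sum>j\<in>UNIV. W i j * \<bar>h i + h j\<bar> powr p) + (\<Sum>i\<in>UNIV. kappa i * \<bar>h i\<bar> powr p)"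

definition Phi :: "('n::finite \<Rightarrow> 'n \<Rightarrow> real) \<Rightarrow> ('n \<Rightarrow> real) \<Rightarrow> real \<Rightarrow> ('n \<Rightarrow> real) \<Rightarrow> real" where
  "Phi W kappa p g = (1/2) * (\<Sum>i\<in>UNIV. \<Sum>j\<in>UNIV. W i j * (g i powr (2/p) + g j powr (2/p)) powr p) + (\<Sum>i\<in>UNIV. kappa i * (g i)^2)"

lemma pair_sum:
  fixes E :: "'n::finite \<Rightarrow> 'n \<Rightarrow> bool"
  shows "(\<Sum>(i,j)\<in>{(i,j). E i j}. F i j) = (\<Sum>i\<in>UNIV. \<Sum>j\<in>UNIV. if E i j then F i j else (0::real))"
proof -
  have "(\<Sum>i\<in>UNIV. \<Sum>j\<in>UNIV. if E i j then F i j else (0::real)) =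
        (\<Sum>(i,j)\<in>UNIV \<times> UNIV. if E i j then F i j else 0)"
    by (rule sum.cartesian_product)
  also have "\<dots> = (\<Sum>(i,j)\<in>{(i,j). E i j}. F i j)"
    by (rule sum.mono_neutral_cong_right) (auto split: if_splits)
  finally show ?thesis ..
qed

lemma rayleigh_eq:
  fixes E :: "'n::finite \<Rightarrow> 'n \<Rightarrow> bool" and sigma :: "'n \<Rightarrow> 'n \<Rightarrow> real"
  assumes sig: "\<And>i j. E i j \<Longrightarrow> sigma i j = -1"
    and W: "\<And>i j. W i j = (if E i j then w i j else 0)"
  shows "rayleigh E sigma w mu kappa p h = NUMp W kappa p h / (\<Sum>i\<in>UNIV. mu i * \<bar>h i\<bar> powr p)"
proof -
  have "(\<Sum>(i,j)\<in>{(i,j). E i j}. w i j * \<bar>h i - sigma i j * h j\<bar> powr p) =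
        (\<Sum>i\<in>UNIV. \<Sum>j\<in>UNIV. W i j * \<bar>h i + h j\<bar> powr p)"
    unfolding pair_sum using sig by (intro sum.cong refl) (auto simp: W)
  then show ?thesis unfolding rayleigh_def NUMp_def by simp
qed

lemma lap_eq:
  fixes E :: "'n::finite \<Rightarrow> 'n \<Rightarrow> bool" and sigma :: "'n \<Rightarrow> 'n \<Rightarrow> real"
  assumes sig: "\<And>i j. E i j \<Longrightarrow> sigma i j = -1"
    and W: "\<And>i j. W i j = (if E i j then w i j else 0)"
  shows "p_laplacian E sigma w kappa p f i = (\<Sum>j\<in>UNIV. W i j * Psi p (f i + f j)) + kappa i * Psi p (f i)"
proof -
  have "(\<Sum>j\<in>{j. E i j}. w i j * Psi p (f i - sigma i j * f j)) =
        (\<Sum>j\<in>UNIV. if E i j then w i j * Psi p (f i - sigma i j * f j) else 0)"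
    using sum.inter_filter[of UNIV "\<lambda>j. w i j * Psi p (f i - sigma i j * f j)" "E i"] by simp
  also have "\<dots> = (\<Sum>j\<in>UNIV. W i j * Psi p (f i + f j))"
    using sig by (intro sum.cong refl) (auto simp: W)
  finally show ?thesis unfolding p_laplacian_def by simp
qed

lemma mult_Psi: "x * Psi p x = \<bar>x\<bar> powr p"
proof (cases "x = 0")
  case True then show ?thesis by (simp add: Psi_def)
next
  case False
  then have ax: "\<bar>x\<bar> > 0" by simp
  have "x * Psi p x = \<bar>x\<bar> powr (p - 2) * x^2" using False by (simp add: Psi_def power2_eq_square algebra_simps)
  also have "\<dots> = \<bar>x\<bar> powr (p - 2) * \<bar>x\<bar> powr 2" by simp
  also have "\<dots> = \<bar>x\<bar> powr p" unfolding powr_add[symmetric] by simp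
  finally show ?thesis .
qed

lemma num_eig:
  fixes W :: "'n::finite \<Rightarrow> 'n \<Rightarrow> real"
  assumes Wsym: "\<And>i j. W i j = W j i"
    and eq: "\<And>i. (\<Sum>j\<in>UNIV. W i j * Psi p (f i + f j)) + kappa i * Psi p (f i) = L * mu i * Psi p (f i)"
    and nrm: "(\<Sum>i\<in>UNIV. mu i * \<bar>f i\<bar> powr p) = 1"
  shows "NUMp W kappa p f = L"
proof -
  define A where "A = (\<Sum>i\<in>UNIV. \<Sum>j\<in>UNIV. W i j * f i * Psi p (f i + f j))"
  have "A = (\<Sum>j\<in>UNIV. \<Sum>i\<in>UNIV. W i j * f i * Psi p (f i + f j))" unfolding A_def by (rule sum.swap)
  also have "\<dots> = (\<Sum>i\<in>UNIV. \<Sum>j\<in>UNIV. W i j * f j * Psi p (f i + f j))"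
    using Wsym by (simp add: add.commute)
  finally have AA: "A = (\<Sum>i\<in>UNIV. \<Sum>j\<in>UNIV. W i j * f j * Psi p (f i + f j))" .
  have "2 * A = A + (\<Sum>i\<in>UNIV. \<Sum>j\<in>UNIV. W i j * f j * Psi p (f i + f j))" using AA by simp
  also have "\<dots> = (\<Sum>i\<in>UNIV. \<Sum>j\<in>UNIV. W i j * ((f i + f j) * Psi p (f i + f j)))"
    unfolding A_def by (simp add: sum.distrib[symmetric] algebra_simps)
  also have "\<dots> = (\<Sum>i\<in>UNIV. \<Sum>j\<in>UNIV. W i j * \<bar>f i + f j\<bar> powr p)"
    by (simp add: mult_Psi)
  finally have A2: "2 * A = (\<Sum>i\<in>UNIV. \<Sum>j\<in>UNIV. W i j * \<bar>f i + f j\<bar> powr p)" .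
  have "(\<Sum>i\<in>UNIV. f i * ((\<Sum>j\<in>UNIV. W i j * Psi p (f i + f j)) + kappa i * Psi p (f i))) =
        (\<Sum>i\<in>UNIV. f i * (L * mu i * Psi p (f i)))"
    using eq by simp
  then have "A + (\<Sum>i\<in>UNIV. kappa i * \<bar>f i\<bar> powr p) = L * (\<Sum>i\<in>UNIV. mu i * \<bar>f i\<bar> powr p)"
    unfolding A_def mult_Psi[symmetric]
    by (simp add: sum.distrib sum_distrib_left algebra_simps)
  then show ?thesis unfolding NUMp_def nrm using A2 by simp
qed



lemma sum_powr_le: fixes a b p :: real assumes "0 \<le> a" "0 \<le> b" "0 \<le> p"
  shows "(a + b) powr p \<le> 2 powr p * (a powr p + b powr p)"
proof -
  have "(a + b) powr p \<le> (2 * max a b) powr p" using assms by (intro powr_mono2) auto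
  also have "\<dots> = 2 powr p * (max a b) powr p" using assms by (simp add: powr_mult)
  also have "(max a b) powr p \<le> a powr p + b powr p" by (simp add: max_def)
  then have "2 powr p * (max a b) powr p \<le> 2 powr p * (a powr p + b powr p)" by (intro mult_left_mono) auto
  finally show ?thesis .
qed

lemma coord_bound:
  fixes mu :: "'n::finite \<Rightarrow> real"
  assumes mupos: "\<And>i. mu i > 0" and nn: "\<And>i. 0 \<le> x i" and s: "(\<Sum>i\<in>UNIV. mu i * x i) = 1"
  shows "x i \<le> 1 / mu i"
proof -
  have "mu i * x i \<le> (\<Sum>i\<in>UNIV. mu i * x i)"
    by (rule member_le_sum) (use mupos nn in \<open>auto intro: mult_nonneg_nonneg less_imp_le\<close>)
  then show ?thesis using s mupos[of i] by (simp add: field_simps)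
qed

definition Bnd :: "('n::finite \<Rightarrow> 'n \<Rightarrow> real) \<Rightarrow> ('n \<Rightarrow> real) \<Rightarrow> ('n \<Rightarrow> real) \<Rightarrow> real \<Rightarrow> real" where
  "Bnd W mu kappa p = (1/2) * (\<Sum>i\<in>UNIV. \<Sum>j\<in>UNIV. W i j * (2 powr p * (1 / mu i + 1 / mu j)))
     + (\<Sum>i\<in>UNIV. \<bar>kappa i\<bar> * (1 / mu i))"

lemma NUMp_bdd:
  fixes W :: "'n::finite \<Rightarrow> 'n \<Rightarrow> real"
  assumes Wnn: "\<And>i j. W i j \<ge> 0" and mupos: "\<And>i. mu i > 0" and p: "p > 1"
    and s: "(\<Sum>i\<in>UNIV. mu i * \<bar>h i\<bar> powr p) = 1"
  shows "NUMp W kappa p h \<le> Bnd W mu kappa p"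
proof -
  have cb: "\<bar>h i\<bar> powr p \<le> 1 / mu i" for i
    by (rule coord_bound[OF mupos _ s]) simp
  have t1: "W i j * \<bar>h i + h j\<bar> powr p \<le> W i j * (2 powr p * (1 / mu i + 1 / mu j))" for i j
  proof -
    have "\<bar>h i + h j\<bar> powr p \<le> (\<bar>h i\<bar> + \<bar>h j\<bar>) powr p"
      using p by (intro powr_mono2) (auto simp: abs_triangle_ineq)
    also have "\<dots> \<le> 2 powr p * (\<bar>h i\<bar> powr p + \<bar>h j\<bar> powr p)" using p by (intro sum_powr_le) auto
    also have "\<dots> \<le> 2 powr p * (1 / mu i + 1 / mu j)" using cb by (intro mult_left_mono add_mono) auto
    finally show ?thesis using Wnn[of i j] by (intro mult_left_mono) auto
  qed
  have t2: "kappa i * \<bar>h i\<bar> powr p \<le> \<bar>kappa i\<bar> * (1 / mu i)" for i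
  proof -
    have "kappa i * \<bar>h i\<bar> powr p \<le> \<bar>kappa i\<bar> * \<bar>h i\<bar> powr p" by (intro mult_right_mono) auto
    also have "\<dots> \<le> \<bar>kappa i\<bar> * (1 / mu i)" using cb by (intro mult_left_mono) auto
    finally show ?thesis .
  qed
  show ?thesis unfolding NUMp_def Bnd_def
    by (intro add_mono mult_left_mono sum_mono t1 t2) auto
qed

lemma NUMp_le_Phi:
  fixes W :: "'n::finite \<Rightarrow> 'n \<Rightarrow> real"
  assumes Wnn: "\<And>i j. W i j \<ge> 0" and p: "p > 1"
  shows "NUMp W kappa p f \<le> Phi W kappa p (\<lambda>i. \<bar>f i\<bar> powr (p/2))"
proof -
  have a: "(\<bar>f i\<bar> powr (p/2)) powr (2/p) = \<bar>f i\<bar>" for i using p by (simp add: powr_powr)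
  have b: "(\<bar>f i\<bar> powr (p/2))^2 = \<bar>f i\<bar> powr p" for i
    by (simp add: power2_eq_square powr_add[symmetric])
  have t: "W i j * \<bar>f i + f j\<bar> powr p \<le> W i j * (\<bar>f i\<bar> + \<bar>f j\<bar>) powr p" for i j
    using Wnn[of i j] p by (intro mult_left_mono powr_mono2) (auto simp: abs_triangle_ineq)
  have "(\<Sum>i\<in>UNIV. \<Sum>j\<in>UNIV. W i j * \<bar>f i + f j\<bar> powr p) \<le> (\<Sum>i\<in>UNIV. \<Sum>j\<in>UNIV. W i j * (\<bar>f i\<bar> + \<bar>f j\<bar>) powr p)"
    by (intro sum_mono t)
  then show ?thesis unfolding NUMp_def Phi_def a b by linarith
qed

lemma hstar:
  fixes W :: "'n::finite \<Rightarrow> 'n \<Rightarrow> real"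
  assumes nn: "\<And>i. g i \<ge> 0" and s: "(\<Sum>i\<in>UNIV. mu i * (g i)^2) = 1" and p: "p > 1"
  shows "(\<Sum>i\<in>UNIV. mu i * \<bar>g i powr (2/p)\<bar> powr p) = 1"
    and "NUMp W kappa p (\<lambda>i. g i powr (2/p)) = Phi W kappa p g"
proof -
  have a: "\<bar>g i powr (2/p)\<bar> powr p = (g i)^2" for i
    using p nn[of i] by (simp add: powr_powr)
  show "(\<Sum>i\<in>UNIV. mu i * \<bar>g i powr (2/p)\<bar> powr p) = 1" unfolding a by (rule s)
  have b: "\<bar>g i powr (2/p) + g j powr (2/p)\<bar> = g i powr (2/p) + g j powr (2/p)" for i j by simp
  show "NUMp W kappa p (\<lambda>i. g i powr (2/p)) = Phi W kappa p g"
    unfolding NUMp_def Phi_def b a ..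
qed

lemma Phi_lower:
  fixes W :: "'n::finite \<Rightarrow> 'n \<Rightarrow> real"
  assumes Wnn: "\<And>i j. W i j \<ge> 0" and nn: "\<And>i. g i \<ge> 0" and p: "p > 1"
  shows "(1/2) * 2 powr p * (\<Sum>i\<in>UNIV. \<Sum>j\<in>UNIV. W i j * g i * g j) + (\<Sum>i\<in>UNIV. kappa i * (g i)^2)
     \<le> Phi W kappa p g"
proof -
  have t: "2 powr p * (W i j * g i * g j) \<le> W i j * (g i powr (2/p) + g j powr (2/p)) powr p" for i j
  proof -
    have "2 powr p * (g i * g j) \<le> (g i powr (2/p) + g j powr (2/p)) powr p"
      using pair_lower[OF nn nn p] .
    then show ?thesis using Wnn[of i j] by (metis mult.assoc mult.left_commute mult_left_mono)
  qed
  have "2 powr p * (\<Sum>i\<in>UNIV. \<Sum>j\<in>UNIV. W i j * g i * g j) \<le>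
      (\<Sum>i\<in>UNIV. \<Sum>j\<in>UNIV. W i j * (g i powr (2/p) + g j powr (2/p)) powr p)"
    unfolding sum_distrib_left by (intro sum_mono t)
  then show ?thesis unfolding Phi_def by simp
qed

lemma Phi_upper:
  fixes W :: "'n::finite \<Rightarrow> 'n \<Rightarrow> real"
  assumes Wnn: "\<And>i j. W i j \<ge> 0" and nn: "\<And>i. g i \<ge> 0" and p: "p > 1"
  shows "Phi W kappa p g \<le> (1/2) * 2 powr p * ((\<Sum>i\<in>UNIV. \<Sum>j\<in>UNIV. W i j * g i * g j)
     + 8*p/(p-1)^2 * (\<Sum>i\<in>UNIV. \<Sum>j\<in>UNIV. W i j * ((g i)^2 + (g j)^2))) + (\<Sum>i\<in>UNIV. kappa i * (g i)^2)"
proof -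
  define c where "c = 8*p/(p-1)^2"
  have t: "W i j * (g i powr (2/p) + g j powr (2/p)) powr p \<le>
       2 powr p * (W i j * g i * g j + c * (W i j * ((g i)^2 + (g j)^2)))" for i j
  proof -
    have "W i j * (g i powr (2/p) + g j powr (2/p)) powr p \<le>
          W i j * (2 powr p * (g i * g j + ((g i)^2 + (g j)^2) * c))"
      using pair_upper[OF nn nn p] Wnn[of i j] unfolding c_def by (intro mult_left_mono)
    also have "\<dots> = 2 powr p * (W i j * g i * g j + c * (W i j * ((g i)^2 + (g j)^2)))"
      by (simp add: algebra_simps)
    finally show ?thesis .
  qed
  have "(\<Sum>i\<in>UNIV. \<Sum>j\<in>UNIV. W i j * (g i powr (2/p) + g j powr (2/p)) powr p) \<le>
      2 powr p * ((\<Sum>i\<in>UNIV. \<Sum>j\<in>UNIV. W i j * g i * g j)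
     + c * (\<Sum>i\<in>UNIV. \<Sum>j\<in>UNIV. W i j * ((g i)^2 + (g j)^2)))"
    unfolding sum_distrib_left sum.distrib[symmetric] by (intro sum_mono t)
  then show ?thesis unfolding Phi_def c_def by simp
qed



theorem theorem5p3:
  fixes E :: "'n::finite \<Rightarrow> 'n \<Rightarrow> bool"
    and sigma w :: "'n \<Rightarrow> 'n \<Rightarrow> real"
    and mu kappa :: "'n \<Rightarrow> real"
    and fp :: "real \<Rightarrow> 'n \<Rightarrow> real"
  assumes graph: "signed_graph E sigma w mu"
    and conn: "connected_graph E"
    and sig: "\<And>i j. E i j \<Longrightarrow> sigma i j = -1"
    and norm: "\<And>p. p > 1 \<Longrightarrow> fp p \<in> S_p mu p"
    and eig: "\<And>p. p > 1 \<Longrightarrow>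
               p_eigenfunction E sigma w mu kappa p (fp p) (lambda_max_p E sigma w mu kappa p)"
  shows "\<exists>f :: 'n \<Rightarrow> real.
           (\<forall>i. ((\<lambda>p. \<bar>fp p i\<bar> powr (p / 2)) \<longlongrightarrow> f i) at_top) \<and>
           mat_eigenvector (adj_mu E (\<lambda>i j. - sigma i j) w mu)
             (mat_lambda_max (adj_mu E (\<lambda>i j. - sigma i j) w mu)) f"
proof -
  have Esym: "\<And>i j. E i j \<Longrightarrow> E j i" and wpos: "\<And>i j. E i j \<Longrightarrow> w i j > 0"
    and wsym: "\<And>i j. E i j \<Longrightarrow> w i j = w j i" and mupos: "\<And>i. mu i > 0"
    using graph unfolding signed_graph_def by auto
  define W where "W = (\<lambda>i j. if E i j then w i j else 0)"
  have Wd: "\<And>i j. W i j = (if E i j then w i j else 0)" unfolding W_def by simp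
  have Wsym: "\<And>i j. W i j = W j i" unfolding W_def using Esym wsym by (auto)
  have Wnn: "\<And>i j. W i j \<ge> 0" unfolding W_def using wpos by (auto simp: less_imp_le)
  have WE: "\<And>i j. E i j \<Longrightarrow> W i j > 0" unfolding W_def using wpos by auto
  have conn': "\<And>i j. E\<^sup>*\<^sup>* i j" using conn unfolding connected_graph_def by auto
  interpret wg: wgraph E W mu
    by unfold_locales (use Wsym Wnn WE mupos conn' in auto)
  define G where "G = (\<lambda>p. \<chi> i. \<bar>fp p i\<bar> powr (p/2))"
  define T0 where "T0 = (\<Sum>i\<in>UNIV. \<Sum>j\<in>UNIV. W i j * (1 / mu i + 1 / mu j))"
  define K0 where "K0 = (\<Sum>i\<in>UNIV. \<bar>kappa i\<bar> * (1 / mu i))"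
  define g0 where "g0 = ($) wg.vmax"
  have g0: "\<And>i. g0 i \<ge> 0" "wg.N g0 = 1" "wg.Q g0 = wg.Lam"
    using wg.vmax(1) unfolding g0_def wg.Kv_def wg.Lam_def by auto
  have kbound: "\<bar>\<Sum>i\<in>UNIV. kappa i * (x i)^2\<bar> \<le> K0" if "wg.N x = 1" for x
  proof -
    have "(x i)^2 \<le> 1 / mu i" for i
      by (rule coord_bound[OF mupos, of "\<lambda>i. (x i)^2"]) (use that in \<open>auto simp: wg.N_def\<close>)
    then have "\<bar>kappa i * (x i)^2\<bar> \<le> \<bar>kappa i\<bar> * (1 / mu i)" for i
    proof -
      have "\<bar>kappa i * (x i)^2\<bar> = \<bar>kappa i\<bar> * (x i)^2" by (simp add: abs_mult)
      also have "\<dots> \<le> \<bar>kappa i\<bar> * (1 / mu i)"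
        using \<open>\<And>i. (x i)^2 \<le> 1 / mu i\<close>[of i] by (intro mult_left_mono) auto
      finally show ?thesis .
    qed
    then have "(\<Sum>i\<in>UNIV. \<bar>kappa i * (x i)^2\<bar>) \<le> K0" unfolding K0_def by (intro sum_mono)
    then show ?thesis using sum_abs[of "\<lambda>i. kappa i * (x i)^2" UNIV] by linarith
  qed
  have key: "G p \<in> wg.Kv \<and> 0 \<le> wg.Lam - wg.Q (($) (G p)) \<and>
      wg.Lam - wg.Q (($) (G p)) \<le> 8*p/(p-1)^2 * T0 + 2 * K0 / 2 powr (p - 1)" if p: "p > 1" for p
  proof -
    define f where "f = fp p"
    define g where "g = (\<lambda>i. \<bar>f i\<bar> powr (p/2))"
    define L where "L = lambda_max_p E sigma w mu kappa p"
    have Gg: "($) (G p) = g" unfolding G_def g_def f_def by simp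
    have nf: "(\<Sum>i\<in>UNIV. mu i * \<bar>f i\<bar> powr p) = 1" using norm[OF p] unfolding S_p_def f_def by simp
    have eqs: "\<And>i. (\<Sum>j\<in>UNIV. W i j * Psi p (f i + f j)) + kappa i * Psi p (f i) = L * mu i * Psi p (f i)"
      using eig[OF p] unfolding p_eigenfunction_def f_def L_def by (auto simp: lap_eq[OF sig Wd])
    have numf: "NUMp W kappa p f = L" by (rule num_eig[OF Wsym eqs nf])
    have gsq: "(g i)^2 = \<bar>f i\<bar> powr p" for i
      unfolding g_def by (simp add: power2_eq_square powr_add[symmetric])
    have gN: "wg.N g = 1" unfolding wg.N_def gsq using nf .
    have gnn: "\<And>i. g i \<ge> 0" unfolding g_def by simp
    have GK: "G p \<in> wg.Kv" unfolding wg.Kv_def Gg using gN gnn by (simp add: G_def g_def f_def)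
    define hs where "hs = (\<lambda>i. g0 i powr (2/p))"
    have s0: "(\<Sum>i\<in>UNIV. mu i * (g0 i)^2) = 1" using g0(2) unfolding wg.N_def .
    have hs1: "(\<Sum>i\<in>UNIV. mu i * \<bar>hs i\<bar> powr p) = 1" unfolding hs_def by (rule hstar(1)[OF g0(1) s0 p])
    have hs2: "NUMp W kappa p hs = Phi W kappa p g0" unfolding hs_def by (rule hstar(2)[OF g0(1) s0 p])
    have ray: "rayleigh E sigma w mu kappa p h = NUMp W kappa p h" if "h \<in> S_p mu p" for h
      using that unfolding S_p_def by (simp add: rayleigh_eq[OF sig Wd])
    have bdd: "bdd_above (rayleigh E sigma w mu kappa p ` S_p mu p)"
    proof (rule bdd_aboveI2)
      fix h assume h: "h \<in> S_p mu p"
      then show "rayleigh E sigma w mu kappa p h \<le> Bnd W mu kappa p"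
        unfolding ray[OF h] using NUMp_bdd[OF Wnn mupos p] h unfolding S_p_def by auto
    qed
    have hsS: "hs \<in> S_p mu p" unfolding S_p_def using hs1 by simp
    have "rayleigh E sigma w mu kappa p hs \<le> L"
      unfolding L_def lambda_max_p_def by (rule cSup_upper) (use hsS bdd in auto)
    then have "Phi W kappa p g0 \<le> L" using ray[OF hsS] hs2 by simp
    also have "L \<le> Phi W kappa p g" unfolding numf[symmetric] g_def by (rule NUMp_le_Phi[OF Wnn p])
    finally have PP: "Phi W kappa p g0 \<le> Phi W kappa p g" .
    have lo: "(1/2) * 2 powr p * wg.Q g0 + (\<Sum>i\<in>UNIV. kappa i * (g0 i)^2) \<le> Phi W kappa p g0"
      using Phi_lower[OF Wnn g0(1) p] unfolding wg.Q_def .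
    have up: "Phi W kappa p g \<le> (1/2) * 2 powr p * (wg.Q g
       + 8*p/(p-1)^2 * (\<Sum>i\<in>UNIV. \<Sum>j\<in>UNIV. W i j * ((g i)^2 + (g j)^2))) + (\<Sum>i\<in>UNIV. kappa i * (g i)^2)"
      using Phi_upper[OF Wnn gnn p] unfolding wg.Q_def .
    have Tb: "(\<Sum>i\<in>UNIV. \<Sum>j\<in>UNIV. W i j * ((g i)^2 + (g j)^2)) \<le> T0"
    proof -
      have "(g i)^2 \<le> 1 / mu i" for i
        by (rule coord_bound[OF mupos, of "\<lambda>i. (g i)^2"]) (use gN in \<open>auto simp: wg.N_def\<close>)
      then show ?thesis unfolding T0_def using Wnn by (intro sum_mono mult_left_mono add_mono) auto
    qed
    define c where "c = 8*p/(p-1)^2"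
    have c0: "c \<ge> 0" unfolding c_def using p by simp
    define P where "P = (1/2) * 2 powr p"
    have P: "P = 2 powr (p - 1)" unfolding P_def by (simp add: powr_diff)
    have Ppos: "P > 0" unfolding P_def by simp
    have k1: "\<bar>\<Sum>i\<in>UNIV. kappa i * (g i)^2\<bar> \<le> K0" by (rule kbound[OF gN])
    have k2: "\<bar>\<Sum>i\<in>UNIV. kappa i * (g0 i)^2\<bar> \<le> K0" by (rule kbound[OF g0(2)])
    have "P * wg.Q g0 + (\<Sum>i\<in>UNIV. kappa i * (g0 i)^2) \<le>
          P * (wg.Q g + c * (\<Sum>i\<in>UNIV. \<Sum>j\<in>UNIV. W i j * ((g i)^2 + (g j)^2))) + (\<Sum>i\<in>UNIV. kappa i * (g i)^2)"
      using lo up PP unfolding P_def c_def by linarith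
    moreover have "P * (c * (\<Sum>i\<in>UNIV. \<Sum>j\<in>UNIV. W i j * ((g i)^2 + (g j)^2))) \<le> P * (c * T0)"
      using Tb c0 Ppos by (intro mult_left_mono) auto
    ultimately have "P * (wg.Lam - wg.Q g - c * T0) \<le> 2 * K0"
      using k1 k2 g0(3) by (simp add: algebra_simps)
    then have "wg.Lam - wg.Q g - c * T0 \<le> 2 * K0 / P" using Ppos by (simp add: pos_le_divide_eq mult.commute)
    then have up2: "wg.Lam - wg.Q g \<le> c * T0 + 2 * K0 / P" by linarith
    have "wg.Q g \<le> wg.Lam * wg.N g" by (rule wg.Q_le)
    then have "0 \<le> wg.Lam - wg.Q g" using gN by simp
    then show ?thesis using GK up2 unfolding Gg c_def P by simp
  qed
  have lim0: "((\<lambda>p. wg.Lam - wg.Q (($) (G p))) \<longlongrightarrow> 0) at_top"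
  proof (rule tendsto_sandwich)
    show "eventually (\<lambda>p. 0 \<le> wg.Lam - wg.Q (($) (G p))) at_top"
      using eventually_gt_at_top[of "1::real"] by eventually_elim (use key in auto)
    show "eventually (\<lambda>p. wg.Lam - wg.Q (($) (G p)) \<le> 8*p/(p-1)^2 * T0 + 2 * K0 / 2 powr (p - 1)) at_top"
      using eventually_gt_at_top[of "1::real"] by eventually_elim (use key in auto)
    show "((\<lambda>p. 0) \<longlongrightarrow> (0::real)) at_top" by simp
    show "((\<lambda>p::real. 8*p/(p-1)^2 * T0 + 2 * K0 / 2 powr (p - 1)) \<longlongrightarrow> 0) at_top"
      by real_asymp
  qed
  have GKev: "eventually (\<lambda>p. G p \<in> wg.Kv) at_top"
    using eventually_gt_at_top[of "1::real"] by eventually_elim (use key in auto)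
  have cont: "continuous_on wg.Kv (\<lambda>v. wg.Lam - wg.Q (($) v))"
    by (intro continuous_on_diff continuous_on_const wg.cont_Q)
  have pos: "wg.Lam - wg.Q (($) v) > 0" if v: "v \<in> wg.Kv" "v \<noteq> wg.vmax" for v
  proof -
    have vv: "\<And>i. 0 \<le> v $ i" "wg.N (($) v) = 1" using v(1) unfolding wg.Kv_def by auto
    have "wg.Q (($) v) \<le> wg.Lam" using wg.Q_le[of "($) v"] vv(2) by simp
    moreover have "wg.Q (($) v) \<noteq> wg.Lam"
    proof
      assume "wg.Q (($) v) = wg.Lam"
      then have "($) v = g0" using wg.unique_max[OF vv _ g0] by simp
      then have "v = wg.vmax" unfolding g0_def by (simp add: vec_eq_iff fun_eq_iff)
      then show False using v(2) by simp
    qed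
    ultimately show ?thesis by simp
  qed
  have GT: "(G \<longlongrightarrow> wg.vmax) at_top"
    by (rule conv_unique_zero[OF wg.compact_Kv cont pos GKev lim0])
  have conv: "((\<lambda>p. \<bar>fp p i\<bar> powr (p / 2)) \<longlongrightarrow> g0 i) at_top" for i
    using tendsto_vec_nth[OF GT, of i] unfolding G_def g0_def by simp
  have adj: "adj_mu E (\<lambda>i j. - sigma i j) w mu i j = W i j / mu i" for i j
    unfolding adj_mu_def W_def using sig by auto
  have meig: "mat_eigenvector (adj_mu E (\<lambda>i j. - sigma i j) w mu) L f \<longleftrightarrow> wg.is_eig L f" for L f
  proof -
    have "(\<Sum>j\<in>UNIV. adj_mu E (\<lambda>i j. - sigma i j) w mu i j * f j) = (\<Sum>j\<in>UNIV. W i j * f j) / mu i" for i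
      unfolding adj by (simp add: sum_divide_distrib)
    moreover have "a / mu i = L * f i \<longleftrightarrow> a = L * mu i * f i" for a i
      using mupos[of i] by (auto simp: field_simps)
    ultimately show ?thesis unfolding mat_eigenvector_def wg.is_eig_def by simp
  qed
  have mev: "mat_eigenvalues (adj_mu E (\<lambda>i j. - sigma i j) w mu) = {L. \<exists>f. wg.is_eig L f}"
    unfolding mat_eigenvalues_def meig ..
  have lmax: "mat_lambda_max (adj_mu E (\<lambda>i j. - sigma i j) w mu) = wg.Lam"
    unfolding mat_lambda_max_def mev by (rule wg.Max_eig)
  show ?thesis
    using conv wg.Lam_eig unfolding lmax meig g0_def by blast
qed

end
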